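(* Let $\rho_m>0$, $f(\rho)=\rho_m-\rho$, and let $\bar\rho$ satisfy $\frac{\rho_m}{2}<\bar\rho<\rho_m$. Then the linear system on $\mathbb{R}^2\times\mathbb{R}$ \[ \begin{cases} \partial_t\psi-(f(\bar\rho)-2\bar\rho)\partial_x\psi-\bar\rho f^2(\bar\rho)\Delta\varphi=0,\\ \partial_t\varphi-f(\bar\rho)\partial_x\varphi+\frac{1}{f(\bar\rho)}\psi=0 \end{cases} \] admits planar wave solutions of the form \[ \psi=A\cos(ax+by+ct),\qquad \varphi=B\sin(ax+by+ct), \] where $a,b,c\in\mathbb{R}$ and $A,B\in\mathbb{R}$ with $AB\neq0$.
   Context: $\Delta$ is the Laplacian in $(x,y)$. This is the linearization (without viscosity) of the generalized Hughes mean-field game system with $\beta=2$ around the constant state $(\bar\rho, x/f(\bar\rho))$. *)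

theory Defs
  imports "HOL-Analysis.Analysis"
begin

definition dx :: "(real \<Rightarrow> real \<Rightarrow> real \<Rightarrow> real) \<Rightarrow> real \<Rightarrow> real \<Rightarrow> real \<Rightarrow> real" where
  "dx u = (\<lambda>x y t. deriv (\<lambda>s. u s y t) x)"

definition dy :: "(real \<Rightarrow> real \<Rightarrow> real \<Rightarrow> real) \<Rightarrow> real \<Rightarrow> real \<Rightarrow> real \<Rightarrow> real" where
  "dy u = (\<lambda>x y t. deriv (\<lambda>s. u x s t) y)"

definition dt :: "(real \<Rightarrow> real \<Rightarrow> real \<Rightarrow> real) \<Rightarrow> real \<Rightarrow> real \<Rightarrow> real \<Rightarrow> real" where
  "dt u = (\<lambda>x y t. deriv (\<lambda>s. u x y s) t)"

definition laplacian :: "(real \<Rightarrow> real \<Rightarrow> real \<Rightarrow> real) \<Rightarrow> real \<Rightarrow> real \<Rightarrow> real \<Rightarrow> real" where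
  "laplacian u = (\<lambda>x y t. dx (dx u) x y t + dy (dy u) x y t)"

end

theory Submission
  imports Defs
begin

lemma dcos: "deriv (\<lambda>s. A * cos (a * s + k)) x = - (A * a * sin (a * x + k))"
  by (rule DERIV_imp_deriv) (auto intro!: derivative_eq_intros)

lemma dsin: "deriv (\<lambda>s. B * sin (a * s + k)) x = B * a * cos (a * x + k)"
  by (rule DERIV_imp_deriv) (auto intro!: derivative_eq_intros)

lemma dcos': "deriv (\<lambda>s. - (A * cos (a * s + k))) x = A * a * sin (a * x + k)"
  by (rule DERIV_imp_deriv) (auto intro!: derivative_eq_intros)

lemma dsin': "deriv (\<lambda>s. - (B * sin (a * s + k))) x = - (B * a * cos (a * x + k))"
  by (rule DERIV_imp_deriv) (auto intro!: derivative_eq_intros)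

lemma psi_d:
  "dt (\<lambda>x y t. A * cos (a * x + b * y + c * t)) x y t = - (A * c * sin (a * x + b * y + c * t))"
  "dx (\<lambda>x y t. A * cos (a * x + b * y + c * t)) x y t = - (A * a * sin (a * x + b * y + c * t))"
proof -
  show "dt (\<lambda>x y t. A * cos (a * x + b * y + c * t)) x y t = - (A * c * sin (a * x + b * y + c * t))"
    using dcos[of A c "a*x+b*y" t] unfolding dt_def by (simp add: add_ac mult_ac)
  show "dx (\<lambda>x y t. A * cos (a * x + b * y + c * t)) x y t = - (A * a * sin (a * x + b * y + c * t))"
    using dcos[of A a "b*y+c*t" x] unfolding dx_def by (simp add: add_ac mult_ac)
qed

lemma phi_d:
  "dt (\<lambda>x y t. B * sin (a * x + b * y + c * t)) x y t = B * c * cos (a * x + b * y + c * t)"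
  "dx (\<lambda>x y t. B * sin (a * x + b * y + c * t)) x y t = B * a * cos (a * x + b * y + c * t)"
  "laplacian (\<lambda>x y t. B * sin (a * x + b * y + c * t)) x y t = - (B * (a^2 + b^2) * sin (a * x + b * y + c * t))"
proof -
  show "dt (\<lambda>x y t. B * sin (a * x + b * y + c * t)) x y t = B * c * cos (a * x + b * y + c * t)"
    using dsin[of B c "a*x+b*y" t] unfolding dt_def by (simp add: add_ac mult_ac)
  show "dx (\<lambda>x y t. B * sin (a * x + b * y + c * t)) x y t = B * a * cos (a * x + b * y + c * t)"
    using dsin[of B a "b*y+c*t" x] unfolding dx_def by (simp add: add_ac mult_ac)
  have 1: "dx (\<lambda>x y t. B * sin (a * x + b * y + c * t)) = (\<lambda>x y t. (B*a) * cos (a * x + (b * y + c * t)))"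
    unfolding dx_def proof (intro ext)
    fix x y t show "deriv (\<lambda>s. B * sin (a * s + b * y + c * t)) x = B * a * cos (a * x + (b * y + c * t))"
      using dsin[of B a "b*y+c*t" x] by (simp add: add.assoc)
  qed
  have 2: "dy (\<lambda>x y t. B * sin (a * x + b * y + c * t)) = (\<lambda>x y t. (B*b) * cos (b * y + (a * x + c * t)))"
    unfolding dy_def proof (intro ext)
    fix x y t show "deriv (\<lambda>s. B * sin (a * x + b * s + c * t)) y = B * b * cos (b * y + (a * x + c * t))"
      using dsin[of B b "a*x+c*t" y] by (simp add: add_ac)
  qed
  have 3: "dx (dx (\<lambda>x y t. B * sin (a * x + b * y + c * t))) x y t = - (B*a*a * sin (a * x + b * y + c * t))"
    unfolding 1 using dcos[of "B*a" a "b*y+c*t" x] unfolding dx_def by (simp add: add_ac mult_ac)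
  have 4: "dy (dy (\<lambda>x y t. B * sin (a * x + b * y + c * t))) x y t = - (B*b*b * sin (a * x + b * y + c * t))"
    unfolding 2 using dcos[of "B*b" b "a*x+c*t" y] unfolding dy_def by (simp add: add_ac mult_ac)
  show "laplacian (\<lambda>x y t. B * sin (a * x + b * y + c * t)) x y t = - (B * (a^2 + b^2) * sin (a * x + b * y + c * t))"
    unfolding laplacian_def 3 4 by (simp add: power2_eq_square algebra_simps)
qed

theorem lemma1:
  fixes \<rho>m \<rho>bar :: real and f :: "real \<Rightarrow> real"
  assumes "\<rho>m > 0"
    and "\<And>\<rho>. f \<rho> = \<rho>m - \<rho>"
    and "\<rho>m / 2 < \<rho>bar" and "\<rho>bar < \<rho>m"
  shows "\<exists>a b c A B :: real. A * B \<noteq> 0 \<and>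
    (let \<psi> = (\<lambda>x y t. A * cos (a * x + b * y + c * t));
         \<phi> = (\<lambda>x y t. B * sin (a * x + b * y + c * t))
     in (\<forall>x y t.
          dt \<psi> x y t - (f \<rho>bar - 2 * \<rho>bar) * dx \<psi> x y t
            - \<rho>bar * (f \<rho>bar)\<^sup>2 * laplacian \<phi> x y t = 0
        \<and> dt \<phi> x y t - f \<rho>bar * dx \<phi> x y t + (1 / f \<rho>bar) * \<psi> x y t = 0))"
proof -
  define F where "F = f \<rho>bar"
  define r where "r = \<rho>bar"
  have F: "F > 0" "F < r" using assms unfolding F_def r_def by auto
  define u where "u = r + sqrt (r * (r - F))"
  have sq: "(sqrt (r * (r - F)))^2 = r * (r - F)" using F by simp
  have upos: "u > 0" unfolding u_def using F by (simp add: add_pos_nonneg)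
  have ueq: "u^2 - 2*r*u + r*F = 0" unfolding u_def using sq by (simp add: power2_eq_square algebra_simps)
  define c where "c = F - u"
  define A where "A = F * u"
  have AB: "A * 1 \<noteq> 0" unfolding A_def using F upos by simp
  show ?thesis
  proof (rule exI[of _ 1], rule exI[of _ 0], rule exI[of _ c], rule exI[of _ A], rule exI[of _ 1], intro conjI AB, unfold Let_def, intro allI conjI)
    fix x y t
    let ?s = "sin (1 * x + 0 * y + c * t)"
    have "(- (A * c) + (F - 2*r) * A + r * F^2) = F * (u^2 - 2*r*u + r*F)"
      unfolding A_def c_def by (simp add: power2_eq_square algebra_simps)
    also have "... = 0" using ueq by simp
    finally have e: "- (A * c) + (F - 2*r) * A + r * F^2 = 0" .
    have "dt (\<lambda>x y t. A * cos (1 * x + 0 * y + c * t)) x y t - (f \<rho>bar - 2 * \<rho>bar) * dx (\<lambda>x y t. A * cos (1 * x + 0 * y + c * t)) x y t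
      - \<rho>bar * (f \<rho>bar)\<^sup>2 * laplacian (\<lambda>x y t. 1 * sin (1 * x + 0 * y + c * t)) x y t
      = (- (A * c) + (F - 2*r) * A + r * F^2) * ?s"
      unfolding psi_d phi_d by (simp add: F_def r_def algebra_simps)
    then show "dt (\<lambda>x y t. A * cos (1 * x + 0 * y + c * t)) x y t - (f \<rho>bar - 2 * \<rho>bar) * dx (\<lambda>x y t. A * cos (1 * x + 0 * y + c * t)) x y t
      - \<rho>bar * (f \<rho>bar)\<^sup>2 * laplacian (\<lambda>x y t. 1 * sin (1 * x + 0 * y + c * t)) x y t = 0"
      using e by simp
    have "dt (\<lambda>x y t. 1 * sin (1 * x + 0 * y + c * t)) x y t - f \<rho>bar * dx (\<lambda>x y t. 1 * sin (1 * x + 0 * y + c * t)) x y t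
       + 1 / f \<rho>bar * (A * cos (1 * x + 0 * y + c * t)) = (c - F + A / F) * cos (1 * x + 0 * y + c * t)"
      unfolding psi_d phi_d by (simp add: F_def algebra_simps)
    moreover have "c - F + A / F = 0" unfolding A_def c_def using F by simp
    ultimately show "dt (\<lambda>x y t. 1 * sin (1 * x + 0 * y + c * t)) x y t - f \<rho>bar * dx (\<lambda>x y t. 1 * sin (1 * x + 0 * y + c * t)) x y t
       + 1 / f \<rho>bar * (A * cos (1 * x + 0 * y + c * t)) = 0" by simp
  qed
qed

end
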